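(* Let $G$ be a connected graph of order $n$ with maximum degree $\Delta\ge 3$. (i) If $2\Delta\le n-1$, then $$SO(G)\ge \Delta\left(\sqrt{\Delta^2+4}+\sqrt5\right)+2(n-2\Delta-1)\sqrt2,$$ with equality if and only if $G$ is a star-like tree of order $n$ with maximum degree $\Delta$ in which every neighbor of the maximum-degree vertex has degree two. (ii) If $2\Delta> n-1$, then $$SO(G)\ge (n-1-\Delta)\left(\sqrt{\Delta^2+4}+\sqrt5\right)+(2\Delta-n+1)\sqrt{\Delta^2+1},$$ with equality if and only if $G$ is a star-like tree of order $n$ with maximum degree $\Delta$ in which the maximum-degree vertex has exactly $2\Delta-n+1$ neighbors of degree one.
   Context: For a graph $G$, $d_G(w)$ denotes the degree of vertex $w$, and the Sombor index is $SO(G)=\sum_{ab\in E(G)}\sqrt{d_G(a)^2+d_G(b)^2}$. A star-like tree is a tree having exactly one vertex of degree greater than two. *)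

theory Defs
  imports Complex_Main
begin

definition simple_graph :: "'a set \<Rightarrow> 'a set set \<Rightarrow> bool" where
  "simple_graph V E \<longleftrightarrow> finite V \<and> (\<forall>e\<in>E. e \<subseteq> V \<and> card e = 2)"

definition adj :: "'a set set \<Rightarrow> 'a \<Rightarrow> 'a \<Rightarrow> bool" where
  "adj E u v \<longleftrightarrow> {u, v} \<in> E \<and> u \<noteq> v"

definition deg :: "'a set set \<Rightarrow> 'a \<Rightarrow> nat" where
  "deg E v = card {e \<in> E. v \<in> e}"

definition max_deg :: "'a set \<Rightarrow> 'a set set \<Rightarrow> nat" where
  "max_deg V E = Max (deg E ` V)"

definition connected_graph :: "'a set \<Rightarrow> 'a set set \<Rightarrow> bool" where
  "connected_graph V E \<longleftrightarrow> V \<noteq> {} \<and> (\<forall>u\<in>V. \<forall>v\<in>V. (adj E)\<^sup>*\<^sup>* u v)"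

definition is_tree :: "'a set \<Rightarrow> 'a set set \<Rightarrow> bool" where
  "is_tree V E \<longleftrightarrow> connected_graph V E \<and> card E + 1 = card V"

definition star_like_tree :: "'a set \<Rightarrow> 'a set set \<Rightarrow> bool" where
  "star_like_tree V E \<longleftrightarrow> is_tree V E \<and> card {v \<in> V. deg E v > 2} = 1"

text \<open>Sombor index: sum over edges ab of sqrt(d(a)^2 + d(b)^2); for an edge e = {a,b}
with a \<noteq> b, the inner sum over v \<in> e is exactly d(a)^2 + d(b)^2.\<close>
definition sombor :: "'a set set \<Rightarrow> real" where
  "sombor E = (\<Sum>e\<in>E. sqrt (\<Sum>v\<in>e. (real (deg E v))\<^sup>2))"

end

theory Submission
  imports Defs
begin


lemma sqrt_lt_num: "0 \<le> b \<Longrightarrow> x < b^2 \<Longrightarrow> sqrt x < (b::real)"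
  by (metis abs_of_nonneg real_sqrt_abs real_sqrt_less_iff)
lemma sqrt_gt_num: "0 \<le> b \<Longrightarrow> b^2 < x \<Longrightarrow> b < sqrt (x::real)"
  by (simp add: real_less_rsqrt)

lemma nums: "sqrt 5 < (22361/10000)" "(2236/1000) < sqrt 5" "(14142/10000) < sqrt 2" "sqrt 2 < (14143/10000)"
  "(3162/1000) < sqrt 10" "(36055/10000) < sqrt 13"
  by (rule sqrt_lt_num sqrt_gt_num; simp add: power2_eq_square)+

lemma sqrt8: "sqrt 8 = 2 * sqrt 2"
  using real_sqrt_mult[of 4 2] by simp

lemma gam: fixes D :: real assumes "D \<ge> 3"
  shows "sqrt (D\<^sup>2+4) - sqrt (D\<^sup>2+1) < (04434/10000)" "sqrt (D\<^sup>2+4) - sqrt (D\<^sup>2+1) > 0"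
proof -
  define s where "s = sqrt (D\<^sup>2+4)"
  define t where "t = sqrt (D\<^sup>2+1)"
  have "3*3 \<le> D*D" using assms by (intro mult_mono) auto
  hence D2: "D\<^sup>2 \<ge> 9" by (simp add: power2_eq_square)
  have s13: "s \<ge> sqrt 13" unfolding s_def using D2 by simp
  have t10: "t \<ge> sqrt 10" unfolding t_def using D2 by simp
  have ss: "s*s = D\<^sup>2+4" unfolding s_def by simp
  have tt: "t*t = D\<^sup>2+1" unfolding t_def by simp
  have st: "s + t > (67675/10000)" using s13 t10 nums by linarith
  have prod: "(s - t) * (s + t) = 3" using ss tt by (simp add: algebra_simps)
  have eq: "s - t = 3 / (s + t)" using prod st by (simp add: field_simps)
  have "s - t = 3 / (s + t)" by (rule eq)
  also have "\<dots> < 3 / (67675/10000)" using st by (intro divide_strict_left_mono) auto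
  finally show "s - t < (04434/10000)" by simp
  show "s - t > 0" using eq st by simp
qed
lemma sq_ge: "m \<le> k \<Longrightarrow> (real m)\<^sup>2 \<le> (real k)\<^sup>2"
  by (simp add: power_mono)

lemma delta_b: "2 * sqrt 2 - sqrt 5 > (5923/10000)" "2 * sqrt 2 - sqrt 5 < (5927/10000)"
  using nums by linarith+

lemma vN1:
  fixes D :: real and k c :: nat
  assumes D: "D \<ge> 3" and kc: "c + 1 \<le> k"
  defines "dl \<equiv> 2 * sqrt 2 - sqrt 5"
  defines "X \<equiv> sqrt (D\<^sup>2 + (real k)\<^sup>2) + (if k \<ge> 3 then dl * c else 0) - sqrt (D\<^sup>2+4) - dl * (real c - 1)"
  shows "0 \<le> X \<and> (X = 0 \<longleftrightarrow> k = 2 \<and> c = 1)"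
proof -
  define r where "r = sqrt (D\<^sup>2 + (real k)\<^sup>2)"
  define s4 where "s4 = sqrt (D\<^sup>2+4)"
  have XX: "X = r + (if k \<ge> 3 then dl * c else 0) - s4 - dl * (real c - 1)" unfolding X_def r_def s4_def by simp
  have g: "sqrt (D\<^sup>2+4) - sqrt (D\<^sup>2+1) < (4434/10000)" using gam[OF D] by simp
  have d: "dl > (5923/10000)" using delta_b unfolding dl_def by simp
  consider "k = 1" | "k = 2" | "k \<ge> 3" using kc by linarith
  then show ?thesis
  proof cases
    case 1
    then have "c = 0" using kc by simp
    then show ?thesis using 1 g d unfolding X_def by simp
  next
    case 2
    then have "c \<le> 1" using kc by simp
    then consider "c = 0" | "c = 1" by linarith
    then show ?thesis using 2 d unfolding X_def by cases (simp_all add: numeral_2_eq_2)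
  next
    case 3
    have "(real 2)\<^sup>2 \<le> (real k)\<^sup>2" using 3 by (intro sq_ge) simp
    then have "s4 \<le> r" unfolding r_def s4_def by simp
    then show ?thesis using 3 d unfolding XX by (auto simp: algebra_simps)
  qed
qed


lemma vA1:
  fixes k q c :: nat
  assumes kc: "c + 1 \<le> k" and q: "q \<ge> 2"
  defines "dl \<equiv> 2 * sqrt 2 - sqrt 5"
  defines "X \<equiv> sqrt ((real k)\<^sup>2 + (real q)\<^sup>2) - (if q \<ge> 3 then dl else 0) + (if k \<ge> 3 then dl * c else 0) - 2 * sqrt 2 - dl * (real c - 1)"
  shows "0 \<le> X \<and> (X = 0 \<longleftrightarrow> q = 2 \<and> (k = 1 \<or> k = 2 \<and> c = 1))"
proof -
  have d: "dl > (5923/10000)" "dl < (5927/10000)" using delta_b unfolding dl_def by simp_all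
  have n: "sqrt 5 < (22361/10000)" "(2236/1000) < sqrt 5" "(14142/10000) < sqrt 2" "sqrt 2 < (14143/10000)"
  "(3162/1000) < sqrt 10" "(36055/10000) < sqrt 13" using nums by auto
  have q2: "(real 2)\<^sup>2 \<le> (real q)\<^sup>2" using q by (intro sq_ge) simp
  define r where "r = sqrt ((real k)\<^sup>2 + (real q)\<^sup>2)"
  define Tq where "Tq = (if q \<ge> 3 then dl else 0)"
  define Rk where "Rk = (if k \<ge> 3 then dl * c else 0)"
  have XX: "X = r - Tq + Rk - 2 * sqrt 2 - dl * (real c - 1)" unfolding X_def r_def Tq_def Rk_def by simp
  have Tq: "Tq \<le> dl" "q = 2 \<Longrightarrow> Tq = 0" using d unfolding Tq_def by auto
  consider "k = 1" | "k = 2" | "k \<ge> 3" using kc by linarith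
  then show ?thesis
  proof cases
    case 1
    then have c: "c = 0" using kc by simp
    have Rk: "Rk = 0" unfolding Rk_def using 1 by simp
    consider "q = 2" | "q \<ge> 3" using q by linarith
    then show ?thesis
    proof cases
      case 1
      have "r = sqrt 5" unfolding r_def using 1 `k = 1` by simp
      then have "X = 0" unfolding XX dl_def using Tq(2)[OF 1] Rk c by simp
      then show ?thesis using 1 `k = 1` by simp
    next
      case 2
      have "(real 3)\<^sup>2 \<le> (real q)\<^sup>2" using 2 by (intro sq_ge) simp
      then have "sqrt 10 \<le> r" using `k = 1` unfolding r_def by simp
      then have "X > 0" unfolding XX using Rk c Tq(1) n d by simp
      then show ?thesis using 2 by simp
    qed
  next
    case 2
    then have c: "c \<le> 1" using kc by simp
    have Rk: "Rk = 0" unfolding Rk_def using 2 by simp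
    have cc: "dl * (real c - 1) \<le> 0" using c d by (simp add: mult_nonneg_nonpos)
    consider "q = 2" | "q \<ge> 3" using q by linarith
    then show ?thesis
    proof cases
      case 1
      have "r = 2 * sqrt 2" unfolding r_def using `k = 2` 1 sqrt8 by simp
      then have X: "X = - dl * (real c - 1)" unfolding XX using Tq(2)[OF 1] Rk by simp
      consider "c = 0" | "c = 1" using c by linarith
      then show ?thesis
      proof cases
        case 1
        then have "X = dl" using X by simp
        then show ?thesis using d 1 `k = 2` by simp
      next
        case c1: 2
        then have "X = 0" using X by simp
        then show ?thesis using c1 `q = 2` `k = 2` by simp
      qed
    next
      case 2
      have "(real 3)\<^sup>2 \<le> (real q)\<^sup>2" using 2 by (intro sq_ge) simp
      then have "sqrt 13 \<le> r" using `k = 2` unfolding r_def by simp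
      then have "X > 0" unfolding XX using Rk cc Tq(1) n d by simp
      then show ?thesis using 2 by simp
    qed
  next
    case 3
    have Rk: "Rk = dl * c" unfolding Rk_def using 3 by simp
    have "(real 3)\<^sup>2 \<le> (real k)\<^sup>2" using 3 by (intro sq_ge) simp
    then have "sqrt 13 \<le> r" using q2 unfolding r_def by simp
    then have "X > 0" unfolding XX Rk using Tq(1) n d by (simp add: algebra_simps)
    then show ?thesis using 3 by simp
  qed
qed

lemma vN2:
  fixes D :: real and k c :: nat
  assumes D: "D \<ge> 3" and kc: "c + 1 \<le> k"
  defines "gm \<equiv> sqrt (D\<^sup>2+4) - sqrt (D\<^sup>2+1)"
  defines "X \<equiv> sqrt (D\<^sup>2 + (real k)\<^sup>2) + (if k \<ge> 3 then gm * c else 0) - sqrt (D\<^sup>2+1) - gm * c"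
  shows "0 \<le> X \<and> (X = 0 \<longleftrightarrow> k = 1 \<or> k = 2 \<and> c = 1)"
proof -
  define r where "r = sqrt (D\<^sup>2 + (real k)\<^sup>2)"
  define s4 where "s4 = sqrt (D\<^sup>2+4)"
  define t1 where "t1 = sqrt (D\<^sup>2+1)"
  define Rk where "Rk = (if k \<ge> 3 then gm * c else 0)"
  have XX: "X = r + Rk - t1 - gm * c" unfolding X_def r_def t1_def Rk_def by simp
  have g: "gm > 0" "gm = s4 - t1" using gam[OF D] unfolding gm_def s4_def t1_def by simp_all
  consider "k = 1" | "k = 2" | "k \<ge> 3" using kc by linarith
  then show ?thesis
  proof cases
    case 1
    then have c: "c = 0" using kc by simp
    have "r = t1" unfolding r_def t1_def using 1 by simp
    then have "X = 0" unfolding XX Rk_def using 1 c by simp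
    then show ?thesis using 1 by simp
  next
    case 2
    then have "c \<le> 1" using kc by simp
    have "r = s4" unfolding r_def s4_def using 2 by simp
    then have X: "X = gm * (1 - real c)" unfolding XX Rk_def using 2 g by (simp add: algebra_simps)
    consider "c = 0" | "c = 1" using `c \<le> 1` by linarith
    then show ?thesis
    proof cases
      case 1
      then have "X = gm" using X by simp
      then show ?thesis using g 1 2 by simp
    next
      case c1: 2
      then have "X = 0" using X by simp
      then show ?thesis using c1 2 by simp
    qed
  next
    case 3
    have "(real 2)\<^sup>2 \<le> (real k)\<^sup>2" using 3 by (intro sq_ge) simp
    then have "s4 \<le> r" unfolding r_def s4_def by simp
    moreover have "X = r - t1" unfolding XX Rk_def using 3 by simp
    ultimately have "X > 0" using g by simp
    then show ?thesis using 3 by simp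
  qed
qed

lemma vA2:
  fixes k q c :: nat and gm :: real
  assumes kc: "c + 1 \<le> k" and q: "q \<ge> 2" and g0: "gm > 0" and g1: "gm < (4434/10000)"
  defines "X \<equiv> sqrt ((real k)\<^sup>2 + (real q)\<^sup>2) - (if q \<ge> 3 then gm else 0) + (if k \<ge> 3 then gm * c else 0) - sqrt 5 - gm * c"
  shows "0 \<le> X \<and> (X = 0 \<longleftrightarrow> k = 1 \<and> q = 2)"
proof -
  have n: "sqrt 5 < (22361/10000)" "(2236/1000) < sqrt 5" "(14142/10000) < sqrt 2" "sqrt 2 < (14143/10000)"
  "(3162/1000) < sqrt 10" "(36055/10000) < sqrt 13" using nums by auto
  have q2: "(real 2)\<^sup>2 \<le> (real q)\<^sup>2" using q by (intro sq_ge) simp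
  define r where "r = sqrt ((real k)\<^sup>2 + (real q)\<^sup>2)"
  define Tq where "Tq = (if q \<ge> 3 then gm else 0)"
  define Rk where "Rk = (if k \<ge> 3 then gm * c else 0)"
  have XX: "X = r - Tq + Rk - sqrt 5 - gm * c" unfolding X_def r_def Tq_def Rk_def by simp
  have Tq: "Tq \<le> gm" "q = 2 \<Longrightarrow> Tq = 0" using g0 unfolding Tq_def by auto
  consider "k = 1" | "k = 2" | "k \<ge> 3" using kc by linarith
  then show ?thesis
  proof cases
    case 1
    then have c: "c = 0" using kc by simp
    have Rk: "Rk = 0" unfolding Rk_def using 1 by simp
    consider "q = 2" | "q \<ge> 3" using q by linarith
    then show ?thesis
    proof cases
      case 1
      have "r = sqrt 5" unfolding r_def using 1 `k = 1` by simp
      then have "X = 0" unfolding XX using Tq(2)[OF 1] Rk c by simp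
      then show ?thesis using 1 `k = 1` by simp
    next
      case 2
      have "(real 3)\<^sup>2 \<le> (real q)\<^sup>2" using 2 by (intro sq_ge) simp
      then have "sqrt 10 \<le> r" using `k = 1` unfolding r_def by simp
      then have "X > 0" unfolding XX using Rk c Tq(1) n g1 by simp
      then show ?thesis using 2 by simp
    qed
  next
    case 2
    then have c: "c \<le> 1" using kc by simp
    have Rk: "Rk = 0" unfolding Rk_def using 2 by simp
    have gc: "gm * c \<le> gm" using c g0 by (simp add: mult_left_le)
    consider "q = 2" | "q \<ge> 3" using q by linarith
    then show ?thesis
    proof cases
      case 1
      have "r = 2 * sqrt 2" unfolding r_def using `k = 2` 1 sqrt8 by simp
      then have "X > 0" unfolding XX using Tq(2)[OF 1] Rk gc n g1 by simp
      then show ?thesis using 2 by simp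
    next
      case 2
      have "(real 3)\<^sup>2 \<le> (real q)\<^sup>2" using 2 by (intro sq_ge) simp
      then have "sqrt 13 \<le> r" using `k = 2` unfolding r_def by simp
      then have "X > 0" unfolding XX using Rk gc Tq(1) n g1 by simp
      then show ?thesis using `k = 2` by simp
    qed
  next
    case 3
    have Rk: "Rk = gm * c" unfolding Rk_def using 3 by simp
    have "(real 3)\<^sup>2 \<le> (real k)\<^sup>2" using 3 by (intro sq_ge) simp
    then have "sqrt 13 \<le> r" using q2 unfolding r_def by simp
    then have "X > 0" unfolding XX Rk using Tq(1) n g1 by simp
    then show ?thesis using 3 by simp
  qed
qed


lemma sg_finE: "simple_graph V E \<Longrightarrow> finite E"
  unfolding simple_graph_def by (meson PowI finite_Pow_iff finite_subset subsetI)

lemma sg_edge: assumes "simple_graph V E" "e \<in> E"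
  shows "\<exists>a b. e = {a,b} \<and> a \<noteq> b \<and> a \<in> V \<and> b \<in> V"
proof -
  have "e \<subseteq> V" "card e = 2" using assms unfolding simple_graph_def by auto
  then show ?thesis by (metis card_2_iff insert_subset)
qed

lemma adj_sym: "adj E u v \<Longrightarrow> adj E v u"
  unfolding adj_def by (auto simp: insert_commute)

lemma adj_V: "simple_graph V E \<Longrightarrow> adj E u v \<Longrightarrow> u \<in> V \<and> v \<in> V"
  unfolding adj_def simple_graph_def by auto

lemma fin_nb: "simple_graph V E \<Longrightarrow> finite {u. adj E v u}"
  using adj_V[of V E v] unfolding simple_graph_def
  by (metis (no_types, lifting) finite_subset mem_Collect_eq subsetI)

lemma deg_nb: assumes "simple_graph V E" shows "deg E v = card {u. adj E v u}"
proof -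
  have "{e \<in> E. v \<in> e} = (\<lambda>u. {v,u}) ` {u. adj E v u}"
  proof
    show "{e \<in> E. v \<in> e} \<subseteq> (\<lambda>u. {v,u}) ` {u. adj E v u}"
    proof
      fix e assume e: "e \<in> {e \<in> E. v \<in> e}"
      then obtain a b where ab: "e = {a,b}" "a \<noteq> b" using sg_edge[OF assms] by blast
      show "e \<in> (\<lambda>u. {v,u}) ` {u. adj E v u}"
      proof (cases "v = a")
        case True
        then show ?thesis using e ab unfolding adj_def by auto
      next
        case False
        then have "v = b" using e ab by auto
        then show ?thesis using e ab unfolding adj_def by (auto simp: insert_commute)
      qed
    qed
    show "(\<lambda>u. {v,u}) ` {u. adj E v u} \<subseteq> {e \<in> E. v \<in> e}"
      unfolding adj_def by auto
  qed
  moreover have "inj_on (\<lambda>u. {v,u}) {u. adj E v u}"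
    unfolding inj_on_def adj_def by (auto simp: doubleton_eq_iff)
  ultimately show ?thesis unfolding deg_def by (simp add: card_image)
qed


lemma main_setup:
  fixes V :: "'a set" and E :: "'a set set" and n \<Delta> :: nat
  assumes sg: "simple_graph V E" and cg: "connected_graph V E"
    and nV: "n = card V" and D: "\<Delta> = max_deg V E" and D3: "\<Delta> \<ge> 3"
  shows "\<exists>w p. w \<in> V \<and> deg E w = \<Delta> \<and> (\<forall>v\<in>V. deg E v \<le> \<Delta>)
      \<and> (\<forall>v\<in>V - {w}. adj E v (p v))
      \<and> inj_on (\<lambda>v. {v, p v}) (V - {w})
      \<and> {u. adj E w u} = {v\<in>V-{w}. p v = w}
      \<and> (\<forall>v\<in>V-{w}. p v \<noteq> w \<longrightarrow> p (p v) \<noteq> v)"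
proof -
  have fin: "finite V" using sg unfolding simple_graph_def by simp
  have Vne: "V \<noteq> {}" using cg unfolding connected_graph_def by simp
  have "Max (deg E ` V) \<in> deg E ` V" using fin Vne by simp
  then obtain w where w: "w \<in> V" "deg E w = \<Delta>" using D unfolding max_deg_def by auto
  have degle: "\<forall>v\<in>V. deg E v \<le> \<Delta>" using fin D unfolding max_deg_def by simp
  define dist where "dist v = (LEAST k. (adj E ^^ k) w v)" for v
  have D1: "(adj E ^^ dist v) w v" if "v \<in> V" for v
  proof -
    have "(adj E)\<^sup>*\<^sup>* w v" using cg w that unfolding connected_graph_def by blast
    then obtain k where "(adj E ^^ k) w v" using rtranclp_power by metis
    then show ?thesis unfolding dist_def by (rule LeastI)
  qed
  have D2: "dist v \<le> k" if "(adj E ^^ k) w v" for v k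
    unfolding dist_def using that by (rule Least_le)
  have D3': "\<exists>y. adj E v y \<and> dist y < dist v" if vV: "v \<in> V" and vw: "v \<noteq> w" for v
  proof (cases "dist v")
    case 0
    then show ?thesis using D1[OF vV] vw by (auto elim: relpowp_0_E)
  next
    case (Suc j)
    then obtain y where "(adj E ^^ j) w y" "adj E y v" using D1[OF vV] by (auto elim: relpowp_Suc_E)
    then show ?thesis using D2 Suc adj_sym by fastforce
  qed
  define p where "p v = (SOME y. adj E v y \<and> dist y < dist v)" for v
  have P1: "adj E v (p v) \<and> dist (p v) < dist v" if "v \<in> V" "v \<noteq> w" for v
    unfolding p_def using D3'[OF that] by (rule someI_ex)
  have dw: "dist w = 0" using D2[of 0 w] by simp
  have dz: "v = w" if "v \<in> V" "dist v = 0" for v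
    using D1[OF that(1)] that(2) by (auto elim: relpowp_0_E)
  have N: "{u. adj E w u} = {v\<in>V-{w}. p v = w}"
  proof
    show "{u. adj E w u} \<subseteq> {v\<in>V-{w}. p v = w}"
    proof
      fix u assume u: "u \<in> {u. adj E w u}"
      then have uV: "u \<in> V" "u \<noteq> w" using adj_V[OF sg] unfolding adj_def by auto
      have "(adj E ^^ 1) w u" using u by (simp only: relpowp_1 mem_Collect_eq)
      then have "dist u \<le> 1" using D2 by blast
      then have "dist (p u) = 0" using P1[OF uV] by simp
      moreover have "p u \<in> V" using P1[OF uV] adj_V[OF sg] by blast
      ultimately have "p u = w" using dz by blast
      then show "u \<in> {v\<in>V-{w}. p v = w}" using uV by simp
    qed
    show "{v\<in>V-{w}. p v = w} \<subseteq> {u. adj E w u}"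
      using P1 adj_sym by fastforce
  qed
  have inj: "inj_on (\<lambda>v. {v, p v}) (V - {w})"
  proof (rule inj_onI)
    fix x y assume x: "x \<in> V - {w}" and y: "y \<in> V - {w}" and e: "{x, p x} = {y, p y}"
    show "x = y"
    proof (rule ccontr)
      assume "x \<noteq> y"
      then have "x = p y" "y = p x" using e by (auto simp: doubleton_eq_iff)
      then show False using P1[of x] P1[of y] x y by auto
    qed
  qed
  have pp: "\<forall>v\<in>V-{w}. p v \<noteq> w \<longrightarrow> p (p v) \<noteq> v"
  proof (intro ballI impI notI)
    fix v assume v: "v \<in> V - {w}" "p v \<noteq> w" "p (p v) = v"
    have "p v \<in> V" using P1[of v] v adj_V[OF sg] by blast
    then show False using P1[of v] P1[of "p v"] v by auto
  qed
  show ?thesis using w degle P1 inj N pp by blast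
qed


locale SL =
  fixes V :: "'a set" and E :: "'a set set" and n \<Delta> :: nat and w :: 'a and p :: "'a \<Rightarrow> 'a"
  assumes sg: "simple_graph V E" and cg: "connected_graph V E"
    and nV: "n = card V" and D3: "\<Delta> \<ge> 3"
    and w: "w \<in> V" and degw: "deg E w = \<Delta>" and degle: "\<forall>v\<in>V. deg E v \<le> \<Delta>"
    and P: "\<forall>v\<in>V - {w}. adj E v (p v)"
    and inj: "inj_on (\<lambda>v. {v, p v}) (V - {w})"
    and Neq: "{u. adj E w u} = {v\<in>V-{w}. p v = w}"
    and pp: "\<forall>v\<in>V-{w}. p v \<noteq> w \<longrightarrow> p (p v) \<noteq> v"
begin

definition "V' = V - {w}"
definition "NN = {v\<in>V'. p v = w}"
definition "A = {v\<in>V'. p v \<noteq> w}"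
definition "ch x = card {c\<in>A. p c = x}"
definition "ed v = {v, p v}"

lemma finV: "finite V" using sg unfolding simple_graph_def by simp
lemma finV': "finite V'" unfolding V'_def using finV by simp
lemma finA: "finite A" unfolding A_def using finV' by simp
lemma finN: "finite NN" unfolding NN_def using finV' by simp
lemma finE: "finite E" using sg_finE[OF sg] .

lemma pV: assumes "v \<in> V'" shows "p v \<in> V \<and> p v \<noteq> v \<and> adj E v (p v)"
proof -
  have a: "adj E v (p v)" using P assms unfolding V'_def by blast
  then have "p v \<in> V" using adj_V[OF sg] by blast
  moreover have "p v \<noteq> v" using a unfolding adj_def by auto
  ultimately show ?thesis using a by blast
qed

lemma pA: "c \<in> A \<Longrightarrow> p c \<in> V'"
  using pV unfolding A_def V'_def by auto

lemma split: "V' = NN \<union> A" "NN \<inter> A = {}"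
  unfolding NN_def A_def by auto

lemma sum_split: "(\<Sum>v\<in>V'. f v) = (\<Sum>v\<in>NN. f v) + (\<Sum>v\<in>A. f v)"
  using split finN finA by (simp add: sum.union_disjoint)

lemma F1: assumes x: "x \<in> V'" shows "1 + ch x \<le> deg E x"
proof -
  have fin: "finite {u. adj E x u}" using fin_nb[OF sg] .
  have sub: "insert (p x) {c\<in>A. p c = x} \<subseteq> {u. adj E x u}"
    using pV x unfolding A_def by (auto intro: adj_sym)
  have notin: "p x \<notin> {c\<in>A. p c = x}"
    using pp x unfolding A_def V'_def by auto
  have "1 + ch x = card (insert (p x) {c\<in>A. p c = x})"
    unfolding ch_def using notin finA by simp
  also have "\<dots> \<le> card {u. adj E x u}" using card_mono[OF fin sub] .
  finally show ?thesis using deg_nb[OF sg] by simp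
qed

lemma F2: assumes EE: "E \<subseteq> ed ` V'" and x: "x \<in> V'" shows "deg E x = 1 + ch x"
proof -
  have sub: "{u. adj E x u} \<subseteq> insert (p x) {c\<in>A. p c = x}"
  proof
    fix u assume "u \<in> {u. adj E x u}"
    then have "{x,u} \<in> E" "x \<noteq> u" unfolding adj_def by auto
    then obtain c where c: "c \<in> V'" "{x,u} = {c, p c}" using EE unfolding ed_def by auto
    then consider "x = c" "u = p c" | "x = p c" "u = c" by (auto simp: doubleton_eq_iff)
    then show "u \<in> insert (p x) {c\<in>A. p c = x}"
    proof cases
      case 1 then show ?thesis by simp
    next
      case 2 then show ?thesis using c x unfolding A_def V'_def by auto
    qed
  qed
  have sub2: "insert (p x) {c\<in>A. p c = x} \<subseteq> {u. adj E x u}"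
    using pV x unfolding A_def by (auto intro: adj_sym)
  have notin: "p x \<notin> {c\<in>A. p c = x}"
    using pp x unfolding A_def V'_def by auto
  have "deg E x = card {u. adj E x u}" using deg_nb[OF sg] .
  also have "{u. adj E x u} = insert (p x) {c\<in>A. p c = x}" using sub sub2 by blast
  also have "card \<dots> = 1 + ch x" unfolding ch_def using notin finA by simp
  finally show ?thesis .
qed

lemma F3: "(\<Sum>x\<in>V'. ch x) = card A"
proof -
  have "(\<Sum>x\<in>V'. ch x) = (\<Sum>y\<in>V'. \<Sum>x\<in>{x. x \<in> A \<and> p x = y}. (1::nat))"
    unfolding ch_def by simp
  also have "\<dots> = (\<Sum>x\<in>A. 1)" using sum.group[OF finA finV', of p "\<lambda>_. (1::nat)"] pA by blast
  finally show ?thesis by simp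
qed

lemma qge2: assumes v: "v \<in> A" shows "deg E (p v) \<ge> 2"
proof -
  have "v \<in> {c\<in>A. p c = p v}" using v by simp
  then have "ch (p v) \<ge> 1" unfolding ch_def using finA
    by (metis (no_types, lifting) One_nat_def Suc_leI card_gt_0_iff empty_iff finite_subset mem_Collect_eq subsetI)
  then show ?thesis using F1[OF pA[OF v]] by simp
qed

lemma cardN: "card NN = \<Delta>"
  using Neq deg_nb[OF sg, of w] degw unfolding NN_def V'_def by simp

lemma cardV': "card V' = n - 1" "n \<ge> 1"
proof -
  show "card V' = n - 1" using w finV nV unfolding V'_def by (auto simp: card_Diff_singleton)
  have "card V > 0" using w finV card_gt_0_iff by blast
  then show "n \<ge> 1" using nV by simp
qed

lemma cardA: "card V' = \<Delta> + card A" "real n = real (card A) + real \<Delta> + 1"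
proof -
  show 1: "card V' = \<Delta> + card A" using split finN finA cardN by (simp add: card_Un_disjoint)
  show "real n = real (card A) + real \<Delta> + 1" using 1 cardV' by simp
qed

lemma transfer:
  "(\<Sum>v\<in>V'. if p v \<noteq> w \<and> 3 \<le> deg E (p v) then (\<tau>::real) else 0)
   = (\<Sum>x\<in>V'. if 3 \<le> deg E x then \<tau> * real (ch x) else 0)"
proof -
  define h where "h c = (if 3 \<le> deg E (p c) then \<tau> else 0)" for c
  have "(\<Sum>x\<in>V'. if 3 \<le> deg E x then \<tau> * real (ch x) else 0)
      = (\<Sum>y\<in>V'. \<Sum>c\<in>{c. c \<in> A \<and> p c = y}. h c)"
  proof (rule sum.cong)
    fix y assume "y \<in> V'"
    have "(\<Sum>c\<in>{c. c \<in> A \<and> p c = y}. h c) = (\<Sum>c\<in>{c. c \<in> A \<and> p c = y}. (if 3 \<le> deg E y then \<tau> else 0))"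
      unfolding h_def by (rule sum.cong) auto
    also have "\<dots> = (if 3 \<le> deg E y then \<tau> * real (ch y) else 0)"
      unfolding ch_def by simp
    finally show "(if 3 \<le> deg E y then \<tau> * real (ch y) else 0) = (\<Sum>c\<in>{c. c \<in> A \<and> p c = y}. h c)" by simp
  qed simp
  also have "\<dots> = (\<Sum>c\<in>A. h c)" using sum.group[OF finA finV', of p h] pA by blast
  also have "\<dots> = (\<Sum>v\<in>V'. if p v \<noteq> w \<and> 3 \<le> deg E (p v) then \<tau> else 0)"
  proof -
    have "(\<Sum>v\<in>V'. if p v \<noteq> w \<and> 3 \<le> deg E (p v) then \<tau> else 0)
       = (\<Sum>v\<in>NN. if p v \<noteq> w \<and> 3 \<le> deg E (p v) then \<tau> else 0) + (\<Sum>v\<in>A. if p v \<noteq> w \<and> 3 \<le> deg E (p v) then \<tau> else 0)"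
      by (rule sum_split)
    also have "(\<Sum>v\<in>NN. if p v \<noteq> w \<and> 3 \<le> deg E (p v) then \<tau> else 0) = 0"
      unfolding NN_def by (rule sum.neutral) auto
    also have "(\<Sum>v\<in>A. if p v \<noteq> w \<and> 3 \<le> deg E (p v) then \<tau> else 0) = (\<Sum>c\<in>A. h c)"
      unfolding h_def A_def by (rule sum.cong) auto
    finally show ?thesis by simp
  qed
  finally show ?thesis by simp
qed

end


context SL begin

definition "wt e = sqrt (\<Sum>v\<in>e. (real (deg E v))\<^sup>2)"
definition "S v = sqrt ((real (deg E v))\<^sup>2 + (real (deg E (p v)))\<^sup>2)"
definition "extra = (\<Sum>e\<in>E - ed ` V'. wt e)"

lemma edE: "ed ` V' \<subseteq> E"
  using pV unfolding ed_def adj_def by auto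

lemma inj': "inj_on ed V'" using inj unfolding ed_def V'_def .

lemma wt_ed: assumes "v \<in> V'" shows "wt (ed v) = S v"
proof -
  have "v \<noteq> p v" using pV[OF assms] by auto
  then have "(\<Sum>x\<in>{v, p v}. (real (deg E x))\<^sup>2) = (real (deg E v))\<^sup>2 + (real (deg E (p v)))\<^sup>2"
    by (subst sum.insert) auto
  then show ?thesis unfolding wt_def ed_def S_def by simp
qed

lemma deg_pos: assumes "e \<in> E" "a \<in> e" shows "deg E a \<ge> 1"
proof -
  have "finite {e \<in> E. a \<in> e}" using finE by simp
  moreover have "e \<in> {e \<in> E. a \<in> e}" using assms by simp
  ultimately have "card {e \<in> E. a \<in> e} > 0" using card_gt_0_iff by blast
  then show ?thesis unfolding deg_def by simp
qed

lemma wt_pos: assumes e: "e \<in> E" shows "wt e > 0"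
proof -
  obtain a b where ab: "e = {a,b}" "a \<noteq> b" using sg_edge[OF sg e] by blast
  have "deg E a \<ge> 1" using deg_pos[OF e] ab by simp
  then have "(real (deg E a))\<^sup>2 \<ge> 1" by simp
  moreover have "(real (deg E b))\<^sup>2 \<ge> 0" by simp
  moreover have "(\<Sum>v\<in>e. (real (deg E v))\<^sup>2) = (real (deg E a))\<^sup>2 + (real (deg E b))\<^sup>2" using ab by simp
  ultimately have "(\<Sum>v\<in>e. (real (deg E v))\<^sup>2) > 0" by linarith
  then show ?thesis unfolding wt_def by simp
qed

lemma so_split: "sombor E = extra + (\<Sum>v\<in>V'. S v)"
proof -
  have "sombor E = (\<Sum>e\<in>E. wt e)" unfolding sombor_def wt_def by simp
  also have "\<dots> = extra + (\<Sum>e\<in>ed ` V'. wt e)"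
    unfolding extra_def using sum.subset_diff[OF edE finE] by simp
  also have "(\<Sum>e\<in>ed ` V'. wt e) = (\<Sum>v\<in>V'. wt (ed v))"
    using sum.reindex[OF inj'] by simp
  also have "\<dots> = (\<Sum>v\<in>V'. S v)" using wt_ed by simp
  finally show ?thesis .
qed

lemma extra_prop: "0 \<le> extra \<and> (extra = 0 \<longleftrightarrow> E \<subseteq> ed ` V')"
proof -
  have nn: "\<forall>e\<in>E - ed ` V'. 0 \<le> wt e" using wt_pos by (simp add: less_imp_le)
  have "0 \<le> extra" unfolding extra_def by (rule sum_nonneg) (use nn in auto)
  moreover have "extra = 0 \<longleftrightarrow> E \<subseteq> ed ` V'"
  proof -
    have "extra = 0 \<longleftrightarrow> (\<forall>e\<in>E - ed ` V'. wt e = 0)"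
      unfolding extra_def by (rule sum_nonneg_eq_0_iff) (use finE nn in auto)
    also have "\<dots> \<longleftrightarrow> E - ed ` V' = {}" using wt_pos by fastforce
    finally show ?thesis by blast
  qed
  ultimately show ?thesis by blast
qed

definition "dl = 2 * sqrt 2 - sqrt 5"
definition "T1 v = (if p v \<noteq> w \<and> 3 \<le> deg E (p v) then dl else 0)"
definition "R1 v = (if 3 \<le> deg E v then dl * real (ch v) else 0)"
definition "base1 v = (if p v = w then sqrt ((real \<Delta>)\<^sup>2 + 4) else 2 * sqrt 2)"
definition "sl1 v = S v - T1 v + R1 v - base1 v - dl * (real (ch v) - 1)"

lemma sum_i: "sombor E = extra + (\<Sum>v\<in>V'. sl1 v)
   + (real \<Delta> * (sqrt ((real \<Delta>)\<^sup>2 + 4) + sqrt 5) + 2 * (real n - 2 * real \<Delta> - 1) * sqrt 2)"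
proof -
  have TR: "(\<Sum>v\<in>V'. T1 v) = (\<Sum>v\<in>V'. R1 v)" unfolding T1_def R1_def by (rule transfer)
  have ch: "(\<Sum>v\<in>V'. real (ch v)) = real (card A)" using F3 by (metis of_nat_sum)
  have b: "(\<Sum>v\<in>V'. base1 v) = real \<Delta> * sqrt ((real \<Delta>)\<^sup>2 + 4) + real (card A) * (2 * sqrt 2)"
  proof -
    have "(\<Sum>v\<in>NN. base1 v) = (\<Sum>v\<in>NN. sqrt ((real \<Delta>)\<^sup>2 + 4))"
      unfolding base1_def NN_def by (rule sum.cong) auto
    moreover have "(\<Sum>v\<in>A. base1 v) = (\<Sum>v\<in>A. 2 * sqrt 2)"
      unfolding base1_def A_def by (rule sum.cong) auto
    ultimately show ?thesis using sum_split[of base1] cardN by simp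
  qed
  have "(\<Sum>v\<in>V'. S v) = (\<Sum>v\<in>V'. sl1 v + T1 v - R1 v + base1 v + dl * real (ch v) - dl)"
    unfolding sl1_def by (rule sum.cong) (auto simp: algebra_simps)
  also have "\<dots> = (\<Sum>v\<in>V'. sl1 v) + (\<Sum>v\<in>V'. T1 v) - (\<Sum>v\<in>V'. R1 v) + (\<Sum>v\<in>V'. base1 v)
      + dl * (\<Sum>v\<in>V'. real (ch v)) - dl * real (card V')"
    by (simp add: sum.distrib sum_subtractf sum_distrib_left)
  also have "\<dots> = (\<Sum>v\<in>V'. sl1 v) + real \<Delta> * sqrt ((real \<Delta>)\<^sup>2 + 4) + real (card A) * (2 * sqrt 2)
      - dl * real \<Delta>"
    using TR ch b cardA(1) by (simp add: algebra_simps)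
  also have "\<dots> = (\<Sum>v\<in>V'. sl1 v) + (real \<Delta> * (sqrt ((real \<Delta>)\<^sup>2 + 4) + sqrt 5) + 2 * (real n - 2 * real \<Delta> - 1) * sqrt 2)"
    using cardA(2) unfolding dl_def by (simp add: algebra_simps)
  finally show ?thesis using so_split by simp
qed

definition "gm = sqrt ((real \<Delta>)\<^sup>2 + 4) - sqrt ((real \<Delta>)\<^sup>2 + 1)"
definition "T2 v = (if p v \<noteq> w \<and> 3 \<le> deg E (p v) then gm else 0)"
definition "R2 v = (if 3 \<le> deg E v then gm * real (ch v) else 0)"
definition "base2 v = (if p v = w then sqrt ((real \<Delta>)\<^sup>2 + 1) else sqrt 5)"
definition "sl2 v = S v - T2 v + R2 v - base2 v - gm * real (ch v)"

lemma sum_ii: "sombor E = extra + (\<Sum>v\<in>V'. sl2 v)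
   + ((real n - 1 - real \<Delta>) * (sqrt ((real \<Delta>)\<^sup>2 + 4) + sqrt 5) + (2 * real \<Delta> - real n + 1) * sqrt ((real \<Delta>)\<^sup>2 + 1))"
proof -
  have TR: "(\<Sum>v\<in>V'. T2 v) = (\<Sum>v\<in>V'. R2 v)" unfolding T2_def R2_def by (rule transfer)
  have ch: "(\<Sum>v\<in>V'. real (ch v)) = real (card A)" using F3 by (metis of_nat_sum)
  have b: "(\<Sum>v\<in>V'. base2 v) = real \<Delta> * sqrt ((real \<Delta>)\<^sup>2 + 1) + real (card A) * sqrt 5"
  proof -
    have "(\<Sum>v\<in>NN. base2 v) = (\<Sum>v\<in>NN. sqrt ((real \<Delta>)\<^sup>2 + 1))"
      unfolding base2_def NN_def by (rule sum.cong) auto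
    moreover have "(\<Sum>v\<in>A. base2 v) = (\<Sum>v\<in>A. sqrt 5)"
      unfolding base2_def A_def by (rule sum.cong) auto
    ultimately show ?thesis using sum_split[of base2] cardN by simp
  qed
  have "(\<Sum>v\<in>V'. S v) = (\<Sum>v\<in>V'. sl2 v + T2 v - R2 v + base2 v + gm * real (ch v))"
    unfolding sl2_def by (rule sum.cong) (auto simp: algebra_simps)
  also have "\<dots> = (\<Sum>v\<in>V'. sl2 v) + (\<Sum>v\<in>V'. T2 v) - (\<Sum>v\<in>V'. R2 v) + (\<Sum>v\<in>V'. base2 v)
      + gm * (\<Sum>v\<in>V'. real (ch v))"
    by (simp add: sum.distrib sum_subtractf sum_distrib_left)
  also have "\<dots> = (\<Sum>v\<in>V'. sl2 v) + real \<Delta> * sqrt ((real \<Delta>)\<^sup>2 + 1) + real (card A) * sqrt 5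
      + gm * real (card A)"
    using TR ch b by (simp add: algebra_simps)
  also have "\<dots> = (\<Sum>v\<in>V'. sl2 v) + ((real n - 1 - real \<Delta>) * (sqrt ((real \<Delta>)\<^sup>2 + 4) + sqrt 5) + (2 * real \<Delta> - real n + 1) * sqrt ((real \<Delta>)\<^sup>2 + 1))"
    using cardA(2) unfolding gm_def by (simp add: algebra_simps)
  finally show ?thesis using so_split by simp
qed

end


context SL begin

definition "cond1 v = (if p v = w then deg E v = 2 \<and> ch v = 1
   else deg E (p v) = 2 \<and> (deg E v = 1 \<or> deg E v = 2 \<and> ch v = 1))"
definition "cond2 v = (if p v = w then deg E v = 1 \<or> deg E v = 2 \<and> ch v = 1
   else deg E v = 1 \<and> deg E (p v) = 2)"

lemma D3r: "real \<Delta> \<ge> 3" using D3 by simp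

lemma S_N: assumes "p v = w" shows "S v = sqrt ((real \<Delta>)\<^sup>2 + (real (deg E v))\<^sup>2)"
proof -
  have "S v = sqrt ((real (deg E v))\<^sup>2 + (real \<Delta>)\<^sup>2)" unfolding S_def using assms degw by simp
  also have "(real (deg E v))\<^sup>2 + (real \<Delta>)\<^sup>2 = (real \<Delta>)\<^sup>2 + (real (deg E v))\<^sup>2" by (rule add.commute)
  finally show ?thesis .
qed

lemma F1': "v \<in> V' \<Longrightarrow> ch v + 1 \<le> deg E v" using F1 by simp

lemma sl1_prop: assumes v: "v \<in> V'" shows "0 \<le> sl1 v \<and> (sl1 v = 0 \<longleftrightarrow> cond1 v)"
proof (cases "p v = w")
  case True
  have "sl1 v = sqrt ((real \<Delta>)\<^sup>2 + (real (deg E v))\<^sup>2) + (if 3 \<le> deg E v then dl * real (ch v) else 0)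
     - sqrt ((real \<Delta>)\<^sup>2 + 4) - dl * (real (ch v) - 1)"
    unfolding sl1_def S_N[OF True] T1_def R1_def base1_def using True by simp
  moreover have "cond1 v = (deg E v = 2 \<and> ch v = 1)" unfolding cond1_def using True by simp
  ultimately show ?thesis using vN1[OF D3r F1'[OF v]] unfolding dl_def by simp
next
  case False
  then have vA: "v \<in> A" using v unfolding A_def by simp
  have "sl1 v = sqrt ((real (deg E v))\<^sup>2 + (real (deg E (p v)))\<^sup>2) - (if 3 \<le> deg E (p v) then dl else 0)
     + (if 3 \<le> deg E v then dl * real (ch v) else 0) - 2 * sqrt 2 - dl * (real (ch v) - 1)"
    unfolding sl1_def S_def T1_def R1_def base1_def using False by simp
  moreover have "cond1 v = (deg E (p v) = 2 \<and> (deg E v = 1 \<or> deg E v = 2 \<and> ch v = 1))"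
    unfolding cond1_def using False by simp
  ultimately show ?thesis using vA1[OF F1'[OF v] qge2[OF vA]] unfolding dl_def by auto
qed

lemma sl2_prop: assumes v: "v \<in> V'" shows "0 \<le> sl2 v \<and> (sl2 v = 0 \<longleftrightarrow> cond2 v)"
proof (cases "p v = w")
  case True
  have "sl2 v = sqrt ((real \<Delta>)\<^sup>2 + (real (deg E v))\<^sup>2) + (if 3 \<le> deg E v then gm * real (ch v) else 0)
     - sqrt ((real \<Delta>)\<^sup>2 + 1) - gm * real (ch v)"
    unfolding sl2_def S_N[OF True] T2_def R2_def base2_def using True by simp
  moreover have "cond2 v = (deg E v = 1 \<or> deg E v = 2 \<and> ch v = 1)" unfolding cond2_def using True by simp
  ultimately show ?thesis using vN2[OF D3r F1'[OF v]] unfolding gm_def by simp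
next
  case False
  then have vA: "v \<in> A" using v unfolding A_def by simp
  have g: "gm > 0" "gm < 4434/10000" using gam[OF D3r] unfolding gm_def by auto
  have "sl2 v = sqrt ((real (deg E v))\<^sup>2 + (real (deg E (p v)))\<^sup>2) - (if 3 \<le> deg E (p v) then gm else 0)
     + (if 3 \<le> deg E v then gm * real (ch v) else 0) - sqrt 5 - gm * real (ch v)"
    unfolding sl2_def S_def T2_def R2_def base2_def using False by simp
  moreover have "cond2 v = (deg E v = 1 \<and> deg E (p v) = 2)" unfolding cond2_def using False by simp
  ultimately show ?thesis using vA2[OF F1'[OF v] qge2[OF vA] g] by simp
qed

end


context SL begin

lemma tree_iff: "is_tree V E \<longleftrightarrow> E \<subseteq> ed ` V'"
proof
  assume t: "is_tree V E"
  have "card E + 1 = card V" using t unfolding is_tree_def by simp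
  then have cE: "card E = card (ed ` V')" using card_image[OF inj'] cardV' nV by simp
  have "ed ` V' = E" using card_subset_eq[OF finE edE cE[symmetric]] .
  then show "E \<subseteq> ed ` V'" by simp
next
  assume EE: "E \<subseteq> ed ` V'"
  then have "E = ed ` V'" using edE by blast
  then have "card E = card V'" using card_image[OF inj'] by simp
  then have "card E + 1 = card V" using cardV' nV by simp
  then show "is_tree V E" using cg unfolding is_tree_def by simp
qed

lemma star_iff: "star_like_tree V E \<longleftrightarrow> is_tree V E \<and> (\<forall>v\<in>V'. deg E v \<le> 2)"
proof -
  have wS: "w \<in> {v \<in> V. deg E v > 2}" using w degw D3 by simp
  have "card {v \<in> V. deg E v > 2} = 1 \<longleftrightarrow> {v \<in> V. deg E v > 2} = {w}"
  proof
    assume "card {v \<in> V. deg E v > 2} = 1"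
    then obtain x where "{v \<in> V. deg E v > 2} = {x}" using card_1_singletonE by blast
    then show "{v \<in> V. deg E v > 2} = {w}" using wS by auto
  qed simp
  also have "\<dots> \<longleftrightarrow> (\<forall>v\<in>V'. deg E v \<le> 2)"
  proof
    assume a: "{v \<in> V. deg E v > 2} = {w}"
    show "\<forall>v\<in>V'. deg E v \<le> 2"
    proof
      fix v assume "v \<in> V'"
      then have "v \<in> V" "v \<noteq> w" unfolding V'_def by auto
      then have "v \<notin> {v \<in> V. deg E v > 2}" using a by simp
      then show "deg E v \<le> 2" using `v \<in> V` by simp
    qed
  next
    assume a: "\<forall>v\<in>V'. deg E v \<le> 2"
    show "{v \<in> V. deg E v > 2} = {w}"
    proof
      show "{v \<in> V. deg E v > 2} \<subseteq> {w}"
      proof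
        fix v assume v: "v \<in> {v \<in> V. deg E v > 2}"
        show "v \<in> {w}"
        proof (rule ccontr)
          assume "v \<notin> {w}"
          then have "v \<in> V'" using v unfolding V'_def by simp
          then show False using a v by fastforce
        qed
      qed
    qed (use wS in simp)
  qed
  finally show ?thesis unfolding star_like_tree_def by blast
qed

lemma only_w: assumes le: "\<forall>v\<in>V'. deg E v \<le> 2" and x: "x \<in> V" "deg E x = \<Delta>" shows "x = w"
proof (rule ccontr)
  assume "x \<noteq> w"
  then have "x \<in> V'" using x unfolding V'_def by simp
  then have "deg E x \<le> 2" using le by blast
  then show False using x D3 by simp
qed

lemma nbrN: "adj E w u \<longleftrightarrow> u \<in> V' \<and> p u = w"
proof -
  have "adj E w u \<longleftrightarrow> u \<in> {u. adj E w u}" by simp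
  also have "\<dots> \<longleftrightarrow> u \<in> {v\<in>V-{w}. p v = w}" using Neq by simp
  finally show ?thesis unfolding V'_def by simp
qed

lemma pw2: assumes le: "\<forall>v\<in>V'. deg E v \<le> 2" and v: "v \<in> A" shows "deg E (p v) = 2"
proof -
  have "p v \<in> V'" using pA[OF v] .
  then have "deg E (p v) \<le> 2" using le by blast
  then show ?thesis using qge2[OF v] by simp
qed

lemma struct_i: "(E \<subseteq> ed ` V' \<and> (\<forall>v\<in>V'. cond1 v)) \<longleftrightarrow>
   star_like_tree V E \<and> (\<forall>x\<in>V. deg E x = \<Delta> \<longrightarrow> (\<forall>u. adj E x u \<longrightarrow> deg E u = 2))"
proof
  assume H: "E \<subseteq> ed ` V' \<and> (\<forall>v\<in>V'. cond1 v)"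
  have le2: "\<forall>v\<in>V'. deg E v \<le> 2"
  proof
    fix v assume "v \<in> V'"
    then have "cond1 v" using H by blast
    then show "deg E v \<le> 2" unfolding cond1_def by (auto split: if_splits)
  qed
  have st: "star_like_tree V E" using star_iff tree_iff H le2 by blast
  moreover have "\<forall>x\<in>V. deg E x = \<Delta> \<longrightarrow> (\<forall>u. adj E x u \<longrightarrow> deg E u = 2)"
  proof (intro ballI impI allI)
    fix x u assume x: "x \<in> V" "deg E x = \<Delta>" and a: "adj E x u"
    have "x = w" using only_w[OF le2 x] .
    then have u: "u \<in> V'" "p u = w" using a nbrN by auto
    then have "cond1 u" using H by blast
    then show "deg E u = 2" using u unfolding cond1_def by simp
  qed
  ultimately show "star_like_tree V E \<and> (\<forall>x\<in>V. deg E x = \<Delta> \<longrightarrow> (\<forall>u. adj E x u \<longrightarrow> deg E u = 2))" by blast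
next
  assume H: "star_like_tree V E \<and> (\<forall>x\<in>V. deg E x = \<Delta> \<longrightarrow> (\<forall>u. adj E x u \<longrightarrow> deg E u = 2))"
  have EE: "E \<subseteq> ed ` V'" and le2: "\<forall>v\<in>V'. deg E v \<le> 2" using H star_iff tree_iff by blast+
  have dch: "\<forall>v\<in>V'. deg E v = 1 + ch v" using F2[OF EE] by blast
  have "\<forall>v\<in>V'. cond1 v"
  proof
    fix v assume v: "v \<in> V'"
    show "cond1 v"
    proof (cases "p v = w")
      case True
      then have "adj E w v" using nbrN v by simp
      then have "deg E v = 2" using H w degw by blast
      then show ?thesis using True dch v unfolding cond1_def by simp
    next
      case False
      then have vA: "v \<in> A" using v unfolding A_def by simp
      have "deg E (p v) = 2" using pw2[OF le2 vA] .
      moreover have "deg E v \<le> 2" "deg E v = 1 + ch v" using le2 dch v by auto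
      ultimately show ?thesis using False unfolding cond1_def by auto
    qed
  qed
  then show "E \<subseteq> ed ` V' \<and> (\<forall>v\<in>V'. cond1 v)" using EE by blast
qed

end


context SL begin

definition "LL = {v\<in>NN. deg E v = 1}"

lemma LL_eq: "{u. adj E w u \<and> deg E u = 1} = LL"
  unfolding LL_def NN_def using nbrN by blast

lemma finLL: "finite LL" unfolding LL_def using finN by simp

lemma sumN: assumes EE: "E \<subseteq> ed ` V'" and le2: "\<forall>v\<in>V'. deg E v \<le> 2"
  shows "(\<Sum>v\<in>NN. ch v) + card LL = \<Delta>"
proof -
  have dch: "\<forall>v\<in>V'. deg E v = 1 + ch v" using F2[OF EE] by blast
  have sub: "LL \<subseteq> NN" unfolding LL_def by auto
  have "(\<Sum>v\<in>NN. ch v) = (\<Sum>v\<in>NN - LL. ch v) + (\<Sum>v\<in>LL. ch v)"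
    using sum.subset_diff[OF sub finN] .
  also have "(\<Sum>v\<in>LL. ch v) = 0"
  proof (rule sum.neutral, rule ballI)
    fix v assume "v \<in> LL"
    then have "v \<in> V'" "deg E v = 1" unfolding LL_def NN_def by auto
    then show "ch v = 0" using dch by simp
  qed
  also have "(\<Sum>v\<in>NN - LL. ch v) = (\<Sum>v\<in>NN - LL. 1)"
  proof (rule sum.cong, simp)
    fix v assume "v \<in> NN - LL"
    then have "v \<in> V'" "deg E v \<noteq> 1" unfolding LL_def NN_def by auto
    then show "ch v = 1" using dch le2 by force
  qed
  also have "\<dots> = card NN - card LL" using card_Diff_subset[OF finLL sub] by simp
  finally have "(\<Sum>v\<in>NN. ch v) = card NN - card LL" by simp
  moreover have "card LL \<le> card NN" using card_mono[OF finN sub] .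
  ultimately show ?thesis using cardN by simp
qed

lemma struct_ii: "(E \<subseteq> ed ` V' \<and> (\<forall>v\<in>V'. cond2 v)) \<longleftrightarrow>
   star_like_tree V E \<and> (\<forall>x\<in>V. deg E x = \<Delta> \<longrightarrow>
       real (card {u. adj E x u \<and> deg E u = 1}) = 2 * real \<Delta> - real n + 1)"
proof
  assume H: "E \<subseteq> ed ` V' \<and> (\<forall>v\<in>V'. cond2 v)"
  have EE: "E \<subseteq> ed ` V'" using H by blast
  have dch: "\<forall>v\<in>V'. deg E v = 1 + ch v" using F2[OF EE] by blast
  have le2: "\<forall>v\<in>V'. deg E v \<le> 2"
  proof
    fix v assume "v \<in> V'"
    then have "cond2 v" using H by blast
    then show "deg E v \<le> 2" unfolding cond2_def by (auto split: if_splits)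
  qed
  have st: "star_like_tree V E" using star_iff tree_iff H le2 by blast
  have A0: "(\<Sum>v\<in>A. ch v) = 0"
  proof (rule sum.neutral, rule ballI)
    fix v assume v: "v \<in> A"
    then have v': "v \<in> V'" "p v \<noteq> w" unfolding A_def by auto
    then have "cond2 v" using H by blast
    then have "deg E v = 1" using v' unfolding cond2_def by simp
    then show "ch v = 0" using dch v' by simp
  qed
  have "card A = (\<Sum>v\<in>NN. ch v)" using F3 sum_split[of ch] A0 by simp
  then have c: "card A + card LL = \<Delta>" using sumN[OF EE le2] by simp
  have "real (card LL) = 2 * real \<Delta> - real n + 1"
  proof -
    have "real (card A) + real (card LL) = real \<Delta>" using c by (metis of_nat_add)
    then show ?thesis using cardA(2) by simp
  qed
  then have R: "\<forall>x\<in>V. deg E x = \<Delta> \<longrightarrow>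
       real (card {u. adj E x u \<and> deg E u = 1}) = 2 * real \<Delta> - real n + 1"
  proof (intro ballI impI)
    fix x assume "real (card LL) = 2 * real \<Delta> - real n + 1" "x \<in> V" "deg E x = \<Delta>"
    moreover have "x = w" using only_w[OF le2] `x \<in> V` `deg E x = \<Delta>` by blast
    ultimately show "real (card {u. adj E x u \<and> deg E u = 1}) = 2 * real \<Delta> - real n + 1"
      using LL_eq by simp
  qed
  show "star_like_tree V E \<and> (\<forall>x\<in>V. deg E x = \<Delta> \<longrightarrow>
       real (card {u. adj E x u \<and> deg E u = 1}) = 2 * real \<Delta> - real n + 1)"
    using st R by blast
next
  assume H: "star_like_tree V E \<and> (\<forall>x\<in>V. deg E x = \<Delta> \<longrightarrow>
       real (card {u. adj E x u \<and> deg E u = 1}) = 2 * real \<Delta> - real n + 1)"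
  have EE: "E \<subseteq> ed ` V'" and le2: "\<forall>v\<in>V'. deg E v \<le> 2" using H star_iff tree_iff by blast+
  have dch: "\<forall>v\<in>V'. deg E v = 1 + ch v" using F2[OF EE] by blast
  have "real (card {u. adj E w u \<and> deg E u = 1}) = 2 * real \<Delta> - real n + 1" using H w degw by blast
  then have "real (card LL) = 2 * real \<Delta> - real n + 1" unfolding LL_eq .
  then have "real (card LL) + real (card A) = real \<Delta>" using cardA(2) by simp
  then have c: "card LL + card A = \<Delta>" by (metis of_nat_add of_nat_eq_iff)
  have "card A = (\<Sum>v\<in>NN. ch v) + (\<Sum>v\<in>A. ch v)" using F3 sum_split[of ch] by simp
  then have "(\<Sum>v\<in>A. ch v) = 0" using sumN[OF EE le2] c by simp
  then have A0: "\<forall>v\<in>A. ch v = 0" using finA by simp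
  have "\<forall>v\<in>V'. cond2 v"
  proof
    fix v assume v: "v \<in> V'"
    show "cond2 v"
    proof (cases "p v = w")
      case True
      have "deg E v \<le> 2" "deg E v = 1 + ch v" using le2 dch v by auto
      then show ?thesis using True unfolding cond2_def by auto
    next
      case False
      then have vA: "v \<in> A" using v unfolding A_def by simp
      have "deg E (p v) = 2" using pw2[OF le2 vA] .
      moreover have "deg E v = 1" using dch v A0 vA by simp
      ultimately show ?thesis using False unfolding cond2_def by auto
    qed
  qed
  then show "E \<subseteq> ed ` V' \<and> (\<forall>v\<in>V'. cond2 v)" using EE by blast
qed

lemma part_i:
  defines "B \<equiv> real \<Delta> * (sqrt ((real \<Delta>)\<^sup>2 + 4) + sqrt 5) + 2 * (real n - 2 * real \<Delta> - 1) * sqrt 2"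
  shows "B \<le> sombor E \<and> (sombor E = B \<longleftrightarrow> star_like_tree V E \<and>
     (\<forall>x\<in>V. deg E x = \<Delta> \<longrightarrow> (\<forall>u. adj E x u \<longrightarrow> deg E u = 2)))"
proof -
  have eq: "sombor E = extra + (\<Sum>v\<in>V'. sl1 v) + B" using sum_i unfolding B_def by simp
  have nn: "\<forall>v\<in>V'. 0 \<le> sl1 v" using sl1_prop by blast
  have s0: "0 \<le> (\<Sum>v\<in>V'. sl1 v)" by (rule sum_nonneg) (use nn in blast)
  have ex: "0 \<le> extra \<and> (extra = 0 \<longleftrightarrow> E \<subseteq> ed ` V')" by (rule extra_prop)
  have "B \<le> sombor E" using eq s0 ex by linarith
  moreover have a: "sombor E = B \<longleftrightarrow> extra = 0 \<and> (\<Sum>v\<in>V'. sl1 v) = 0" using eq s0 ex by linarith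
  have b: "(\<Sum>v\<in>V'. sl1 v) = 0 \<longleftrightarrow> (\<forall>v\<in>V'. sl1 v = 0)"
    by (rule sum_nonneg_eq_0_iff) (use finV' nn in auto)
  have c: "(\<forall>v\<in>V'. sl1 v = 0) \<longleftrightarrow> (\<forall>v\<in>V'. cond1 v)" using sl1_prop by blast
  have "sombor E = B \<longleftrightarrow> (E \<subseteq> ed ` V' \<and> (\<forall>v\<in>V'. cond1 v))"
    unfolding a b c using ex by blast
  ultimately show ?thesis unfolding struct_i by blast
qed

lemma part_ii:
  defines "B \<equiv> (real n - 1 - real \<Delta>) * (sqrt ((real \<Delta>)\<^sup>2 + 4) + sqrt 5) + (2 * real \<Delta> - real n + 1) * sqrt ((real \<Delta>)\<^sup>2 + 1)"
  shows "B \<le> sombor E \<and> (sombor E = B \<longleftrightarrow> star_like_tree V E \<and>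
     (\<forall>x\<in>V. deg E x = \<Delta> \<longrightarrow> real (card {u. adj E x u \<and> deg E u = 1}) = 2 * real \<Delta> - real n + 1))"
proof -
  have eq: "sombor E = extra + (\<Sum>v\<in>V'. sl2 v) + B" using sum_ii unfolding B_def by simp
  have nn: "\<forall>v\<in>V'. 0 \<le> sl2 v" using sl2_prop by blast
  have s0: "0 \<le> (\<Sum>v\<in>V'. sl2 v)" by (rule sum_nonneg) (use nn in blast)
  have ex: "0 \<le> extra \<and> (extra = 0 \<longleftrightarrow> E \<subseteq> ed ` V')" by (rule extra_prop)
  have "B \<le> sombor E" using eq s0 ex by linarith
  moreover have a: "sombor E = B \<longleftrightarrow> extra = 0 \<and> (\<Sum>v\<in>V'. sl2 v) = 0" using eq s0 ex by linarith
  have b: "(\<Sum>v\<in>V'. sl2 v) = 0 \<longleftrightarrow> (\<forall>v\<in>V'. sl2 v = 0)"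
    by (rule sum_nonneg_eq_0_iff) (use finV' nn in auto)
  have c: "(\<forall>v\<in>V'. sl2 v = 0) \<longleftrightarrow> (\<forall>v\<in>V'. cond2 v)" using sl2_prop by blast
  have "sombor E = B \<longleftrightarrow> (E \<subseteq> ed ` V' \<and> (\<forall>v\<in>V'. cond2 v))"
    unfolding a b c using ex by blast
  ultimately show ?thesis unfolding struct_ii by blast
qed

end

theorem theorem2p2:
  fixes V :: "'a set" and E :: "'a set set" and n \<Delta> :: nat
  assumes "simple_graph V E" and "connected_graph V E"
    and "n = card V" and "\<Delta> = max_deg V E" and "\<Delta> \<ge> 3"
  shows "(2 * \<Delta> \<le> n - 1 \<longrightarrow>
            sombor E \<ge> \<Delta> * (sqrt (\<Delta>\<^sup>2 + 4) + sqrt 5) + 2 * (real n - 2 * \<Delta> - 1) * sqrt 2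
          \<and> (sombor E = \<Delta> * (sqrt (\<Delta>\<^sup>2 + 4) + sqrt 5) + 2 * (real n - 2 * \<Delta> - 1) * sqrt 2
              \<longleftrightarrow> star_like_tree V E \<and>
                  (\<forall>w\<in>V. deg E w = \<Delta> \<longrightarrow> (\<forall>u. adj E w u \<longrightarrow> deg E u = 2))))
       \<and> (2 * \<Delta> > n - 1 \<longrightarrow>
            sombor E \<ge> (real n - 1 - \<Delta>) * (sqrt (\<Delta>\<^sup>2 + 4) + sqrt 5)
                        + (2 * \<Delta> - real n + 1) * sqrt (\<Delta>\<^sup>2 + 1)
          \<and> (sombor E = (real n - 1 - \<Delta>) * (sqrt (\<Delta>\<^sup>2 + 4) + sqrt 5)
                        + (2 * \<Delta> - real n + 1) * sqrt (\<Delta>\<^sup>2 + 1)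
              \<longleftrightarrow> star_like_tree V E \<and>
                  (\<forall>w\<in>V. deg E w = \<Delta> \<longrightarrow>
                     real (card {u. adj E w u \<and> deg E u = 1}) = 2 * \<Delta> - real n + 1)))"
  proof -
  obtain w p where H: "w \<in> V \<and> deg E w = \<Delta> \<and> (\<forall>v\<in>V. deg E v \<le> \<Delta>)
      \<and> (\<forall>v\<in>V - {w}. adj E v (p v))
      \<and> inj_on (\<lambda>v. {v, p v}) (V - {w})
      \<and> {u. adj E w u} = {v\<in>V-{w}. p v = w}
      \<and> (\<forall>v\<in>V-{w}. p v \<noteq> w \<longrightarrow> p (p v) \<noteq> v)"
    using main_setup[OF assms] by blast
  interpret SL V E n \<Delta> w p
    using assms H by unfold_locales blast+
  have eqs: "real (\<Delta>\<^sup>2 + 4) = (real \<Delta>)\<^sup>2 + 4" "real (\<Delta>\<^sup>2 + 1) = (real \<Delta>)\<^sup>2 + 1"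
    "real (2 * \<Delta>) = 2 * real \<Delta>" by simp_all
  show ?thesis unfolding eqs using part_i part_ii by blast
qed

end
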